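(* Let $\bar L^g>0$, $\gamma_0>0$, $\beta_0:=\bar L^g/\gamma_0$, and let $c_k\in(-1,1]$ for $k\ge0$. Define $a_0:=\big(1+c_0+\sqrt{4(1-c_0)+(1+c_0)^2}\big)/2$, $a_{k+1}:=\big(1+c_{k+1}+\sqrt{4a_k^2+(1-c_{k+1})^2}\big)/2$, $\tau_k:=a_k^{-1}$, $\beta_{k+1}:=(1-\tau_k)\beta_k$, $\gamma_{k+1}:=(1-c_k\tau_k)\gamma_k$, and $s_k:=\sum_{i=1}^kc_i$. Then for all $k\ge0$, $$\frac{k+a_0+s_k}{2}\le a_k\le k+a_0,\qquad \frac{\bar L^g}{(k+a_0)^2}\le\gamma_{k+1}\beta_{k+1}\le\frac{4\bar L^g}{(k+a_0+s_k)^2}.$$ Moreover, if $c_k=0$ for all $k$, then $\frac{\beta_0}{(k+2)^2}\le\beta_{k+1}\le\frac{4\beta_0}{(k+1)^2}$, and if $c_k=1$ for all $k$, then $\beta_{k+1}=\frac{\beta_0}{k+2}$. *)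

theory Defs
  imports Complex_Main
begin

primrec aseq :: "(nat \<Rightarrow> real) \<Rightarrow> nat \<Rightarrow> real" where
  "aseq c 0 = (1 + c 0 + sqrt (4 * (1 - c 0) + (1 + c 0)^2)) / 2"
| "aseq c (Suc k) = (1 + c (Suc k) + sqrt (4 * (aseq c k)^2 + (1 - c (Suc k))^2)) / 2"

definition tau :: "(nat \<Rightarrow> real) \<Rightarrow> nat \<Rightarrow> real" where
  "tau c k = inverse (aseq c k)"

primrec betaseq :: "real \<Rightarrow> real \<Rightarrow> (nat \<Rightarrow> real) \<Rightarrow> nat \<Rightarrow> real" where
  "betaseq Lg g0 c 0 = Lg / g0"
| "betaseq Lg g0 c (Suc k) = (1 - tau c k) * betaseq Lg g0 c k"

primrec gammaseq :: "real \<Rightarrow> (nat \<Rightarrow> real) \<Rightarrow> nat \<Rightarrow> real" where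
  "gammaseq g0 c 0 = g0"
| "gammaseq g0 c (Suc k) = (1 - c k * tau c k) * gammaseq g0 c k"

definition sseq :: "(nat \<Rightarrow> real) \<Rightarrow> nat \<Rightarrow> real" where
  "sseq c k = (\<Sum>i=1..k. c i)"

end

theory Submission
  imports Defs
begin

lemma a0_eq:
  assumes "-1 < c 0" "c 0 \<le> 1"
  shows "(aseq c 0 - 1) * (aseq c 0 - c 0) = 1" and "aseq c 0 > 1"
proof -
  define r where "r = sqrt (4 * (1 - c 0) + (1 + c 0)^2)"
  have nn: "0 \<le> 4 * (1 - c 0) + (1 + c 0)^2" using assms by (smt (verit) zero_le_power2)
  have r0: "r \<ge> 0" unfolding r_def using nn by simp
  have r2: "r^2 = 4 * (1 - c 0) + (1 + c 0)^2" unfolding r_def using nn by simp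
  have a: "aseq c 0 = (1 + c 0 + r)/2" by (simp add: r_def)
  have "(aseq c 0 - 1) * (aseq c 0 - c 0) = (r^2 - (1 - c 0)^2) / 4"
    unfolding a by (simp add: field_simps power2_eq_square)
  also have "\<dots> = 1" unfolding r2 by (simp add: power2_eq_square algebra_simps)
  finally show "(aseq c 0 - 1) * (aseq c 0 - c 0) = 1" .
  have id: "4 * (1 - c 0) + (1 + c 0)^2 = 4 + (c 0 - 1)^2" by (simp add: power2_eq_square algebra_simps)
  have "sqrt 4 \<le> r" unfolding r_def id
    by (intro real_sqrt_le_mono) simp
  hence "r \<ge> 2" by simp
  thus "aseq c 0 > 1" unfolding a using assms by simp
qed

lemma aSuc_facts:
  assumes "-1 < c (Suc k)" "c (Suc k) \<le> 1" "aseq c k \<ge> 0"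
  shows "aseq c (Suc k)^2 - aseq c k^2 = (1 + c (Suc k)) * aseq c (Suc k) - c (Suc k)"
    and "2 * aseq c k + 1 + c (Suc k) \<le> 2 * aseq c (Suc k)"
    and "aseq c (Suc k) \<le> aseq c k + 1"
proof -
  define a where "a = aseq c k"
  define d where "d = c (Suc k)"
  define A where "A = aseq c (Suc k)"
  define r where "r = sqrt (4 * a^2 + (1 - d)^2)"
  have a0: "a \<ge> 0" using assms(3) a_def by simp
  have d1: "d \<le> 1" using assms d_def by simp
  have r2: "r^2 = 4 * a^2 + (1 - d)^2" unfolding r_def by simp
  have e: "A = (1 + d + r)/2" by (simp add: A_def r_def a_def d_def)
  have rr: "r = 2 * A - 1 - d" using e by simp
  have "(2 * A - 1 - d)^2 = 4 * a^2 + (1 - d)^2" using r2 rr by simp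
  hence "4 * (A^2 - a^2 - ((1 + d) * A - d)) = 0" by (simp add: power2_eq_square algebra_simps)
  hence "A^2 - a^2 = (1 + d) * A - d" by simp
  thus "aseq c (Suc k)^2 - aseq c k^2 = (1 + c (Suc k)) * aseq c (Suc k) - c (Suc k)"
    by (simp add: A_def a_def d_def)
  have "sqrt ((2 * a)^2) \<le> r" unfolding r_def
    by (intro real_sqrt_le_mono) (simp add: power_mult_distrib)
  moreover have "sqrt ((2 * a)^2) = 2 * a" using a0 by (simp only: real_sqrt_abs)
  ultimately have "2 * a \<le> r" by simp
  thus "2 * aseq c k + 1 + c (Suc k) \<le> 2 * aseq c (Suc k)" unfolding A_def[symmetric] a_def[symmetric] d_def[symmetric] using e by (simp add: field_simps)
  have "a * (1 - d) \<ge> 0" using a0 d1 by simp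
  hence "4 * a^2 + (1 - d)^2 \<le> (2 * a + (1 - d))^2" by (simp add: power2_eq_square algebra_simps)
  hence "r \<le> sqrt ((2 * a + (1 - d))^2)" unfolding r_def by (rule real_sqrt_le_mono)
  hence "r \<le> 2 * a + (1 - d)" using a0 d1 by simp
  thus "aseq c (Suc k) \<le> aseq c k + 1" unfolding A_def[symmetric] a_def[symmetric] d_def[symmetric] using e by (simp add: field_simps)
qed

declare aseq.simps[simp del]

lemma cancel_helper: "(x::real) \<noteq> 0 \<Longrightarrow> (x / y) * (B / x) = B / y"
  by simp

lemma prod_step:
  fixes A d G B :: real
  assumes "A > 1"
  shows "(1 - d * inverse A) * G * ((1 - inverse A) * B) = (A - 1) * (A - d) / A ^ 2 * (G * B)"
  using assms by (simp add: field_simps power2_eq_square)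

theorem lemma4p4:
  fixes Lg g0 :: real and c :: "nat \<Rightarrow> real"
  assumes "Lg > 0" and "g0 > 0"
    and "\<forall>k. -1 < c k \<and> c k \<le> 1"
  shows "(\<forall>k. (real k + aseq c 0 + sseq c k) / 2 \<le> aseq c k
            \<and> aseq c k \<le> real k + aseq c 0
            \<and> Lg / (real k + aseq c 0)^2
                \<le> gammaseq g0 c (Suc k) * betaseq Lg g0 c (Suc k)
            \<and> gammaseq g0 c (Suc k) * betaseq Lg g0 c (Suc k)
                \<le> 4 * Lg / (real k + aseq c 0 + sseq c k)^2)
       \<and> ((\<forall>k. c k = 0) \<longrightarrow>
            (\<forall>k. betaseq Lg g0 c 0 / (real k + 2)^2 \<le> betaseq Lg g0 c (Suc k)
               \<and> betaseq Lg g0 c (Suc k) \<le> 4 * betaseq Lg g0 c 0 / (real k + 1)^2))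
       \<and> ((\<forall>k. c k = 1) \<longrightarrow>
            (\<forall>k. betaseq Lg g0 c (Suc k) = betaseq Lg g0 c 0 / (real k + 2)))"
proof -
  have hc: "-1 < c k" "c k \<le> 1" for k using assms(3) by auto
  note A0 = a0_eq[of c, OF hc(1) hc(2)]
  have ge: "aseq c k \<ge> aseq c 0" for k
  proof (induction k)
    case (Suc k)
    have "aseq c k \<ge> 0" using Suc A0(2) by linarith
    from aSuc_facts(2)[OF hc(1)[of "Suc k"] hc(2)[of "Suc k"] this] Suc hc[of "Suc k"] show ?case by linarith
  qed simp
  have apos: "aseq c k > 1" for k using ge[of k] A0(2) by linarith
  have aS1: "aseq c (Suc k)^2 - aseq c k^2 = (1 + c (Suc k)) * aseq c (Suc k) - c (Suc k)"
    and aS2: "2 * aseq c k + 1 + c (Suc k) \<le> 2 * aseq c (Suc k)"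
    and aS3: "aseq c (Suc k) \<le> aseq c k + 1" for k
    using aSuc_facts[of c k, OF hc(1)[of "Suc k"] hc(2)[of "Suc k"]] apos[of k] by auto
  have up: "aseq c k \<le> real k + aseq c 0" for k
  proof (induction k)
    case (Suc k)
    from aS3[of k] apos[of k] Suc show ?case unfolding of_nat_Suc by linarith
  qed simp
  have lo: "2 * aseq c 0 + real k + sseq c k \<le> 2 * aseq c k" for k
  proof (induction k)
    case (Suc k)
    have s: "sseq c (Suc k) = sseq c k + c (Suc k)" unfolding sseq_def by simp
    from aS2[of k] apos[of k] Suc show ?case unfolding s of_nat_Suc by linarith
  qed (simp add: sseq_def)
  have P: "gammaseq g0 c (Suc k) * betaseq Lg g0 c (Suc k) = Lg / aseq c k ^ 2" for k
  proof (induction k)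
    case 0
    have "gammaseq g0 c (Suc 0) * betaseq Lg g0 c (Suc 0)
        = (aseq c 0 - 1) * (aseq c 0 - c 0) / aseq c 0 ^ 2 * Lg"
      unfolding gammaseq.simps betaseq.simps tau_def
      using prod_step[OF apos[of 0], of "c 0" g0 "Lg / g0"] assms(2) by simp
    thus ?case using A0(1) by simp
  next
    case (Suc k)
    have "gammaseq g0 c (Suc (Suc k)) * betaseq Lg g0 c (Suc (Suc k))
        = (aseq c (Suc k) - 1) * (aseq c (Suc k) - c (Suc k)) / aseq c (Suc k) ^ 2 *
          (gammaseq g0 c (Suc k) * betaseq Lg g0 c (Suc k))"
      unfolding gammaseq.simps(2)[of g0 c "Suc k"] betaseq.simps(2)[of Lg g0 c "Suc k"] tau_def
      using prod_step apos[of "Suc k"] by blast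
    also have "(aseq c (Suc k) - 1) * (aseq c (Suc k) - c (Suc k)) = aseq c k ^ 2"
      using aS1[of k] apos[of k] by (simp add: algebra_simps power2_eq_square)
    finally show ?case using Suc apos[of k] by (simp add: field_simps)
  qed
  have sl: "sseq c k \<ge> - real k" for k
  proof (induction k)
    case (Suc k)
    have s: "sseq c (Suc k) = sseq c k + c (Suc k)" unfolding sseq_def by simp
    show ?case unfolding s of_nat_Suc using Suc hc[of "Suc k"] by linarith
  qed (simp add: sseq_def)
  have part1: "(real k + aseq c 0 + sseq c k) / 2 \<le> aseq c k
            \<and> aseq c k \<le> real k + aseq c 0
            \<and> Lg / (real k + aseq c 0)^2
                \<le> gammaseq g0 c (Suc k) * betaseq Lg g0 c (Suc k)
            \<and> gammaseq g0 c (Suc k) * betaseq Lg g0 c (Suc k)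
                \<le> 4 * Lg / (real k + aseq c 0 + sseq c k)^2" for k
  proof -
    have "real k + aseq c 0 + sseq c k \<le> 2 * aseq c k" using lo[of k] A0(2) by linarith
    hence l1: "(real k + aseq c 0 + sseq c k) / 2 \<le> aseq c k" by simp
    have pos: "real k + aseq c 0 + sseq c k > 0" using sl[of k] A0(2) by linarith
    have q1: "aseq c k ^ 2 \<le> (real k + aseq c 0)^2"
      using up[of k] apos[of k] by (simp add: power_mono)
    have q2: "((real k + aseq c 0 + sseq c k)/2)^2 \<le> aseq c k ^ 2"
      using l1 pos by (simp add: power_mono)
    have "Lg / (real k + aseq c 0)^2 \<le> Lg / aseq c k ^ 2"
      using q1 apos[of k] assms(1) by (simp add: frac_le)
    moreover have "Lg / aseq c k ^ 2 \<le> Lg / ((real k + aseq c 0 + sseq c k)/2)^2"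
      using q2 pos assms(1) by (simp add: frac_le)
    moreover have "Lg / ((real k + aseq c 0 + sseq c k)/2)^2 = 4 * Lg / (real k + aseq c 0 + sseq c k)^2"
      by (simp add: power_divide)
    ultimately show ?thesis using l1 up[of k] P[of k] by simp
  qed
  have part2: "betaseq Lg g0 c 0 / (real k + 2)^2 \<le> betaseq Lg g0 c (Suc k)
               \<and> betaseq Lg g0 c (Suc k) \<le> 4 * betaseq Lg g0 c 0 / (real k + 1)^2"
    if c0: "\<forall>k. c k = 0" for k
  proof -
    have g: "gammaseq g0 c n = g0" for n by (induction n) (simp_all add: c0)
    have b: "betaseq Lg g0 c (Suc k) = betaseq Lg g0 c 0 / aseq c k ^ 2"
    proof -
      have e1: "g0 * betaseq Lg g0 c (Suc k) = Lg / aseq c k ^ 2" using P[of k] unfolding g .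
      have "betaseq Lg g0 c (Suc k) = (g0 * betaseq Lg g0 c (Suc k)) / g0"
        using assms(2) by (simp del: betaseq.simps)
      also have "\<dots> = Lg / g0 / aseq c k ^ 2" unfolding e1 by (simp del: betaseq.simps)
      finally show ?thesis by (simp only: betaseq.simps(1))
    qed
    have s0: "sseq c k = 0" unfolding sseq_def using c0 by simp
    have a0: "aseq c 0 = (1 + sqrt 5)/2" using c0 by (simp add: aseq.simps)
    have "sqrt 5 \<le> sqrt ((3::real)^2)" by (intro real_sqrt_le_mono) simp
    hence "sqrt 5 \<le> 3" by (simp only: real_sqrt_abs abs_numeral)
    hence a02: "aseq c 0 \<le> 2" using a0 by simp
    have u: "aseq c k \<le> real k + 2" using up[of k] a02 by simp
    have "real k + 1 \<le> 2 * aseq c k" using lo[of k] s0 A0(2) by simp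
    hence l: "(real k + 1)/2 \<le> aseq c k" by simp
    have B: "betaseq Lg g0 c 0 > 0" using assms by simp
    have q1: "aseq c k ^ 2 \<le> (real k + 2)^2" using u apos[of k] by (simp add: power_mono)
    have q2: "((real k + 1)/2)^2 \<le> aseq c k ^ 2" using l by (simp add: power_mono)
    have "betaseq Lg g0 c 0 / (real k + 2)^2 \<le> betaseq Lg g0 c 0 / aseq c k ^ 2"
      using q1 apos[of k] B by (intro divide_left_mono) (auto simp del: betaseq.simps)
    moreover have "betaseq Lg g0 c 0 / aseq c k ^ 2 \<le> betaseq Lg g0 c 0 / ((real k + 1)/2)^2"
      using q2 B apos[of k] by (intro divide_left_mono) (auto simp del: betaseq.simps)
    moreover have "betaseq Lg g0 c 0 / ((real k + 1)/2)^2 = 4 * betaseq Lg g0 c 0 / (real k + 1)^2"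
      by (simp add: power_divide)
    ultimately show ?thesis using b by (simp del: betaseq.simps)
  qed
  have part3: "betaseq Lg g0 c (Suc k) = betaseq Lg g0 c 0 / (real k + 2)"
    if c1: "\<forall>k. c k = 1" for k
  proof -
    have a: "aseq c n = real n + 2" for n
    proof (induction n)
      case (Suc n)
      have e: "4 * (real n + 2)^2 = (2 * (real n + 2))^2" by (simp add: power2_eq_square algebra_simps)
      have "sqrt (4 * (real n + 2)^2) = 2 * (real n + 2)" unfolding e by (simp only: real_sqrt_abs) simp
      thus ?case using Suc by (simp add: c1 aseq.simps)
    qed (simp add: c1 aseq.simps)
    show ?thesis
    proof (induction k)
      case 0 show ?case by (simp add: tau_def a)
    next
      case (Suc k)
      have "betaseq Lg g0 c (Suc (Suc k)) = (1 - inverse (real k + 3)) * betaseq Lg g0 c (Suc k)"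
        by (simp only: betaseq.simps(2)[of Lg g0 c "Suc k"] tau_def a) simp
      also have "\<dots> = (1 - inverse (real k + 3)) * (betaseq Lg g0 c 0 / (real k + 2))"
        using Suc by (simp del: betaseq.simps)
      also have "1 - inverse (real k + 3) = (real k + 2) / (real k + 3)"
        by (simp add: field_simps)
      also have "(real k + 2) / (real k + 3) * (betaseq Lg g0 c 0 / (real k + 2))
          = betaseq Lg g0 c 0 / (real k + 3)"
        using cancel_helper[of "real k + 2" "real k + 3" "betaseq Lg g0 c 0"] by simp
      finally show ?case by (simp del: betaseq.simps add: add.commute)
    qed
  qed
  show ?thesis using part1 part2 part3 by blast
qed

end
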